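(* In the setting described in the context, suppose Method 1 does not stop, and let $(x^k)_{k\in\mathbb N}$ be the generated sequence (with associated $(\bar x^k)$, $(\alpha_k)$). Then: (i) $(x^k)$ is Fejér convergent to $\operatorname{zer}(A+B)$, i.e. for every $x\in\operatorname{zer}(A+B)$, $\|x^{k+1}-x\|\le\|x^k-x\|$ for all $k$ sufficiently large; (ii) $(x^k)$ is bounded; (iii) $\lim_{k\to\infty}\Big(\langle x^k-\bar x^k-\alpha_k(A_2x^k-A_2\bar x^k),\,x^k-\bar x^k\rangle-\bar\delta\|x^k-\bar x^k\|^2\Big)=0$.
   Context: Let $\mathcal H$ be a real Hilbert space with inner product $\langle\cdot,\cdot\rangle$ and norm $\|\cdot\|$. Let $A_1:\mathcal H\to\mathcal H$ be $\beta$-cocoercive for some $\beta>0$ (i.e. $\langle A_1x-A_1y,x-y\rangle\ge\beta\|A_1x-A_1y\|^2$ for all $x,y$), let $A_2:\mathcal H\to\mathcal H$ be maximally monotone and uniformly continuous, let $B:\mathcal H\rightrightarrows\mathcal H$ be maximally monotone, and set $A:=A_1+A_2$. Assume $\operatorname{zer}(A+B):=\{x:0\in Ax+Bx\}\neq\emptyset$. $J_{\alpha B}:=(I+\alpha B)^{-1}$ for $\alpha>0$, and $P_C$ denotes the orthogonal projection onto a nonempty closed convex set $C$. Fix $\theta,\delta\in(0,1)$, $\bar\delta>0$ with $1-\delta-\bar\delta>0$, and $\alpha_{-1}>0$ with $\alpha_{-1}\le4\beta\bar\delta$. Conceptual Algorithm: pick $x^0\in\mathcal H$. Given $x^k$ and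 $\alpha_{k-1}$, for $j\in\mathbb N$ let $\bar x^k_j:=J_{\alpha_{k-1}\theta^jB}(x^k-\alpha_{k-1}\theta^jAx^k)$ and let $j(k)$ be the smallest $j\in\mathbb N$ with $\alpha_{k-1}\theta^j\langle A_2x^k-A_2\bar x^k_j,x^k-\bar x^k_j\rangle\le\delta\|x^k-\bar x^k_j\|^2$. Set $\alpha_k:=\alpha_{k-1}\theta^{j(k)}$, $\bar x^k:=J_{\alpha_kB}(x^k-\alpha_kAx^k)$, $r_k:=\frac{\bar\delta}{\alpha_k}\|x^k-\bar x^k\|^2$ and $T_k:=\{x\in\mathcal H:\langle \frac{x^k-\bar x^k}{\alpha_k}-(A_2x^k-A_2\bar x^k),x-\bar x^k\rangle\le r_k\}$. Method 1 sets $x^{k+1}:=P_{T_k}(x^k)$ and stops if $x^{k+1}=x^k$. *)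

theory Defs
  imports "HOL-Analysis.Analysis"
begin

definition monotone_op :: "('a::real_inner \<Rightarrow> 'a set) \<Rightarrow> bool" where
  "monotone_op B \<longleftrightarrow>
     (\<forall>x y u v. u \<in> B x \<longrightarrow> v \<in> B y \<longrightarrow> inner (x - y) (u - v) \<ge> 0)"

definition maximal_monotone :: "('a::real_inner \<Rightarrow> 'a set) \<Rightarrow> bool" where
  "maximal_monotone B \<longleftrightarrow> monotone_op B \<and>
     (\<forall>x u. (\<forall>y v. v \<in> B y \<longrightarrow> inner (x - y) (u - v) \<ge> 0) \<longrightarrow> u \<in> B x)"

definition cocoercive :: "real \<Rightarrow> ('a::real_inner \<Rightarrow> 'a) \<Rightarrow> bool" where
  "cocoercive \<beta> T \<longleftrightarrow>
     (\<forall>x y. inner (T x - T y) (x - y) \<ge> \<beta> * (norm (T x - T y))\<^sup>2)"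

text \<open>Resolvent J_{\<alpha>B} = (I + \<alpha>B)^{-1}: the unique p with z \<in> p + \<alpha> B p
  (single-valued and everywhere defined for maximally monotone B, \<alpha> > 0).\<close>
definition resolvent :: "real \<Rightarrow> ('a::real_inner \<Rightarrow> 'a set) \<Rightarrow> 'a \<Rightarrow> 'a" where
  "resolvent \<alpha> B z = (THE p. \<exists>u \<in> B p. z = p + \<alpha> *\<^sub>R u)"

definition proj :: "'a::real_inner set \<Rightarrow> 'a \<Rightarrow> 'a" where
  "proj C x = (THE p. p \<in> C \<and> (\<forall>y \<in> C. norm (x - p) \<le> norm (x - y)))"

definition zer_sum :: "('a::real_vector \<Rightarrow> 'a) \<Rightarrow> ('a \<Rightarrow> 'a set) \<Rightarrow> 'a set" where
  "zer_sum A B = {x. \<exists>u \<in> B x. A x + u = 0}"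

end

theory Submission
  imports Defs
begin


lemma hull_bound:
  fixes Q :: "(real \<times> 'a::real_inner \<times> 'a) set"
  assumes fin: "finite Q" and a: "\<forall>q\<in>Q. fst q = - inner (fst (snd q)) (snd (snd q))"
    and mono: "\<forall>q\<in>Q. \<forall>q'\<in>Q. inner (fst (snd q) - fst (snd q')) (snd (snd q) - snd (snd q')) \<ge> 0"
    and k: "k \<in> convex hull Q"
  shows "fst k \<le> (norm ((fst (snd k) - snd (snd k)) /\<^sub>R 2))\<^sup>2"
proof -
  obtain u where u0: "\<forall>x\<in>Q. 0 \<le> u x" and u1: "sum u Q = 1" and uk: "(\<Sum>x\<in>Q. u x *\<^sub>R x) = k"
    using k fin by (auto simp: convex_hull_finite)
  define y where "y q = fst (snd q)" for q :: "real \<times> 'a \<times> 'a"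
  define v where "v q = snd (snd q)" for q :: "real \<times> 'a \<times> 'a"
  define Y where "Y = (\<Sum>q\<in>Q. u q *\<^sub>R y q)"
  define V where "V = (\<Sum>q\<in>Q. u q *\<^sub>R v q)"
  define S1 where "S1 = (\<Sum>q\<in>Q. u q * inner (y q) (v q))"
  have fk: "fst k = - S1" unfolding uk[symmetric] S1_def using a
    by (simp add: fst_sum y_def v_def sum_negf[symmetric])
  have Yk: "fst (snd k) = Y" unfolding uk[symmetric] Y_def
    by (simp add: fst_sum snd_sum y_def)
  have Vk: "snd (snd k) = V" unfolding uk[symmetric] V_def
    by (simp add: fst_sum snd_sum v_def)
  have e1: "(\<Sum>q\<in>Q. \<Sum>q'\<in>Q. u q * u q' * inner (y q) (v q)) = S1"
    by (simp add: S1_def sum_distrib_left[symmetric] sum_distrib_right[symmetric] u1 mult.commute mult.left_commute)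
  have e2: "(\<Sum>q\<in>Q. \<Sum>q'\<in>Q. u q * u q' * inner (y q') (v q')) = S1"
  proof -
    have "(\<Sum>q\<in>Q. \<Sum>q'\<in>Q. u q * u q' * inner (y q') (v q')) = (\<Sum>q\<in>Q. u q * S1)"
      by (simp add: S1_def sum_distrib_left mult.assoc)
    also have "\<dots> = S1" by (simp add: sum_distrib_right[symmetric] u1)
    finally show ?thesis .
  qed
  have e3: "(\<Sum>q\<in>Q. \<Sum>q'\<in>Q. u q * u q' * inner (y q) (v q')) = inner Y V"
    apply (subst sum.swap)
    by (simp add: Y_def V_def inner_sum_left inner_sum_right sum_distrib_left mult.assoc mult.left_commute)
  have e4: "(\<Sum>q\<in>Q. \<Sum>q'\<in>Q. u q * u q' * inner (y q') (v q)) = inner Y V"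
    by (simp add: Y_def V_def inner_sum_left inner_sum_right sum_distrib_left mult.assoc mult.left_commute)
  have "0 \<le> (\<Sum>q\<in>Q. \<Sum>q'\<in>Q. u q * u q' * inner (y q - y q') (v q - v q'))"
    using mono u0 unfolding y_def v_def by (intro sum_nonneg mult_nonneg_nonneg) auto
  also have "\<dots> = (\<Sum>q\<in>Q. \<Sum>q'\<in>Q. u q * u q' * inner (y q) (v q) + u q * u q' * inner (y q') (v q')
        - u q * u q' * inner (y q) (v q') - u q * u q' * inner (y q') (v q))"
    by (simp add: inner_diff_left inner_diff_right algebra_simps)
  also have "\<dots> = 2 * S1 - 2 * inner Y V"
    by (simp add: sum.distrib sum_subtractf e1 e2 e3 e4)
  finally have S1ge: "inner Y V \<le> S1" by simp
  have "(norm ((Y - V) /\<^sub>R 2))\<^sup>2 + inner Y V = (norm ((Y + V) /\<^sub>R 2))\<^sup>2"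
    by (simp add: power2_norm_eq_inner inner_diff_left inner_diff_right inner_add_left inner_add_right inner_commute algebra_simps)
  then show ?thesis using S1ge fk Yk Vk by (smt (verit) zero_le_power2)
qed

lemma fin_monotone:
  fixes P :: "('a::real_inner \<times> 'a) set"
  assumes fin: "finite P" and mono: "\<forall>q\<in>P. \<forall>q'\<in>P. inner (fst q - fst q') (snd q - snd q') \<ge> 0"
  shows "\<exists>p. \<forall>q\<in>P. inner (p - fst q) (p + snd q) \<le> 0"
proof (cases "P = {}")
  case True thus ?thesis by auto
next
  case False
  define emb where "emb q = (- inner (fst q) (snd q), fst q, snd q)" for q :: "'a \<times> 'a"
  define Q where "Q = emb ` P"
  define K where "K = convex hull Q"
  define G where "G k = fst k - (norm ((fst (snd k) - snd (snd k)) /\<^sub>R 2))\<^sup>2" for k :: "real \<times> 'a \<times> 'a"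
  have finQ: "finite Q" using fin by (simp add: Q_def)
  have "compact K" unfolding K_def using finQ by (rule finite_imp_compact_convex_hull)
  moreover have "K \<noteq> {}" using False by (simp add: K_def Q_def)
  moreover have "continuous_on K G" unfolding G_def by (intro continuous_intros)
  ultimately obtain ks where ks: "ks \<in> K" and kmax: "\<forall>k\<in>K. G k \<le> G ks"
    using continuous_attains_sup by blast
  have G0: "G ks \<le> 0" unfolding G_def
  proof -
    have "fst ks \<le> (norm ((fst (snd ks) - snd (snd ks)) /\<^sub>R 2))\<^sup>2"
    proof (rule hull_bound[OF finQ _ _ ks[unfolded K_def]])
      show "\<forall>q\<in>Q. fst q = - inner (fst (snd q)) (snd (snd q))" by (auto simp: Q_def emb_def)
      show "\<forall>q\<in>Q. \<forall>q'\<in>Q. inner (fst (snd q) - fst (snd q')) (snd (snd q) - snd (snd q')) \<ge> 0"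
        using mono by (auto simp: Q_def emb_def)
    qed
    then show "fst ks - (norm ((fst (snd ks) - snd (snd ks)) /\<^sub>R 2))\<^sup>2 \<le> 0" by simp
  qed
  define p where "p = (fst (snd ks) - snd (snd ks)) /\<^sub>R 2"
  have Gks: "G ks = fst ks - (norm p)\<^sup>2" by (simp add: G_def p_def)
  have "\<forall>q\<in>P. inner (p - fst q) (p + snd q) \<le> 0"
  proof
    fix q assume qP: "q \<in> P"
    define e where "e = emb q"
    have eK: "e \<in> K" unfolding K_def e_def Q_def using qP by (meson hull_subset image_eqI subsetD)
    define c where "c = (fst q - snd q) /\<^sub>R 2"
    define aj where "aj = - inner (fst q) (snd q)"
    define D where "D = (norm (c - p))\<^sup>2"
    define X where "X = aj - fst ks - 2 * inner p (c - p)"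
    have step: "X \<le> t * D" if t: "0 < t" "t \<le> 1" for t
    proof -
      define kt where "kt = (1 - t) *\<^sub>R ks + t *\<^sub>R e"
      have "kt \<in> K" unfolding kt_def K_def
        using convexD[OF convex_convex_hull, of ks Q e "1-t" t] ks eK t by (auto simp: K_def)
      hence le: "G kt \<le> G ks" using kmax by blast
      have pt: "(fst (snd kt) - snd (snd kt)) /\<^sub>R 2 = p + t *\<^sub>R (c - p)"
        by (simp add: kt_def e_def emb_def p_def c_def algebra_simps)
      have n2: "(norm (p + t *\<^sub>R (c - p)))\<^sup>2 = (norm p)\<^sup>2 + 2 * t * inner p (c - p) + t\<^sup>2 * D"
        unfolding D_def power2_norm_eq_inner
        by (simp add: inner_add_left inner_add_right inner_diff_left inner_diff_right inner_commute algebra_simps power2_eq_square)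
      have "G kt = (1 - t) * fst ks + t * aj - (norm (p + t *\<^sub>R (c - p)))\<^sup>2"
        unfolding G_def pt by (simp add: kt_def e_def emb_def aj_def)
      with le Gks n2 have "t * X - t\<^sup>2 * D \<le> 0" by (simp add: X_def algebra_simps)
      hence "t * X \<le> t * (t * D)" by (simp add: power2_eq_square algebra_simps)
      thus ?thesis using t by simp
    qed
    have D0: "D \<ge> 0" by (simp add: D_def)
    have X0: "X \<le> 0"
    proof (rule ccontr)
      assume "\<not> X \<le> 0"
      hence Xp: "X > 0" by simp
      define t where "t = min 1 (X / (D + 1))"
      have t0: "0 < t" "t \<le> 1" using Xp D0 by (auto simp: t_def)
      have "t \<le> X / (D + 1)" by (simp add: t_def)
      hence "t * D \<le> X / (D + 1) * D" using D0 by (rule mult_right_mono)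
      also have "\<dots> < X" using Xp D0 by (simp add: field_simps)
      finally show False using step[OF t0] by simp
    qed
    have "inner (p - fst q) (p + snd q) = (norm p)\<^sup>2 - 2 * inner p c + aj"
      by (simp add: c_def aj_def power2_norm_eq_inner inner_add_left inner_add_right inner_diff_left inner_diff_right inner_commute algebra_simps)
    also have "\<dots> \<le> fst ks - (norm p)\<^sup>2"
      using X0 by (simp add: X_def inner_diff_right power2_norm_eq_inner)
    also have "\<dots> \<le> 0" using G0 Gks by simp
    finally show "inner (p - fst q) (p + snd q) \<le> 0" .
  qed
  thus ?thesis by blast
qed

lemma hilbert_fip:
  fixes S :: "'i \<Rightarrow> 'a::{real_inner,complete_space} set"
  assumes cc: "\<And>i. i \<in> I \<Longrightarrow> closed (S i) \<and> convex (S i)"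
    and i0: "i0 \<in> I" and bd: "bounded (S i0)"
    and fip: "\<And>F. finite F \<Longrightarrow> F \<subseteq> I \<Longrightarrow> \<exists>p. \<forall>i\<in>F. p \<in> S i"
  shows "\<exists>p. \<forall>i\<in>I. p \<in> S i"
proof -
  define D where "D F = (\<Inter>i\<in>insert i0 F. S i)" for F
  define e where "e F = Inf ((\<lambda>p. (norm p)\<^sup>2) ` D F)" for F
  define fs where "fs = {F. finite F \<and> F \<subseteq> I}"
  have Dne: "D F \<noteq> {}" if "F \<in> fs" for F
    using fip[of "insert i0 F"] that i0 by (auto simp: fs_def D_def)
  have Dconv: "convex (D F)" if "F \<in> fs" for F
    unfolding D_def using that i0 cc by (intro convex_INT) (auto simp: fs_def)
  obtain R where R: "\<forall>p\<in>S i0. norm p \<le> R" using bd by (auto simp: bounded_iff)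
  have bb: "bdd_below ((\<lambda>p. (norm p)\<^sup>2) ` D F)" for F
    by (rule bdd_belowI[where m=0]) auto
  have e_lower: "e F \<le> (norm p)\<^sup>2" if "p \<in> D F" for F p
    unfolding e_def using that bb by (intro cInf_lower) auto
  have e_approx: "\<exists>p\<in>D F. (norm p)\<^sup>2 < e F + \<epsilon>" if "F \<in> fs" "\<epsilon> > 0" for F \<epsilon>
  proof -
    have "e F < e F + \<epsilon>" using that by simp
    then show ?thesis unfolding e_def using cInf_less_iff[OF _ bb, of F "e F + \<epsilon>"] Dne[OF that(1)]
      unfolding e_def by auto
  qed
  have e_mono: "e F \<le> e G" if "F \<in> fs" "G \<in> fs" "F \<subseteq> G" for F G
  proof -
    have "D G \<subseteq> D F" using that(3) by (auto simp: D_def)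
    then show ?thesis unfolding e_def[of G] using Dne[OF that(2)] e_lower
      by (intro cInf_greatest) auto
  qed
  have e_bd: "e F \<le> R\<^sup>2" if FF: "F \<in> fs" for F
  proof -
    obtain p where p: "p \<in> D F" using Dne[OF FF] by auto
    hence "p \<in> S i0" by (auto simp: D_def)
    hence "norm p \<le> R" using R by auto
    hence "(norm p)\<^sup>2 \<le> R\<^sup>2" by (simp add: power_mono)
    thus ?thesis using e_lower[OF p] by simp
  qed
  have key: "(norm (p - q))\<^sup>2 \<le> 2 * (norm p)\<^sup>2 + 2 * (norm q)\<^sup>2 - 4 * e F"
    if "F \<in> fs" "G \<in> fs" "F \<subseteq> G" "p \<in> D F" "q \<in> D G" for F G p q
  proof -
    have qF: "q \<in> D F" using that by (auto simp: D_def)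
    have "(1/2) *\<^sub>R p + (1/2) *\<^sub>R q \<in> D F"
      using convexD[OF Dconv[OF that(1)] that(4) qF, of "1/2" "1/2"] by simp
    hence "e F \<le> (norm ((1/2) *\<^sub>R p + (1/2) *\<^sub>R q))\<^sup>2" by (rule e_lower)
    moreover have "(norm (p - q))\<^sup>2 = 2 * (norm p)\<^sup>2 + 2 * (norm q)\<^sup>2 - 4 * (norm ((1/2) *\<^sub>R p + (1/2) *\<^sub>R q))\<^sup>2"
      unfolding power2_norm_eq_inner
      by (simp add: inner_add_left inner_add_right inner_diff_left inner_diff_right inner_commute algebra_simps)
    ultimately show ?thesis by simp
  qed
  define d where "d = Sup (e ` fs)"
  have fsne: "{} \<in> fs" by (simp add: fs_def)
  have ba: "bdd_above (e ` fs)" using e_bd by (intro bdd_aboveI[where M="R\<^sup>2"]) auto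
  have e_le_d: "e F \<le> d" if "F \<in> fs" for F
    unfolding d_def using ba that by (intro cSup_upper) auto
  have "\<exists>F\<in>fs. d - 1 / real (Suc n) < e F" for n
  proof -
    have "d - 1 / real (Suc n) < d" by simp
    thus ?thesis using less_cSup_iff[OF _ ba, of "d - 1 / real (Suc n)"] fsne unfolding d_def by auto
  qed
  then obtain F' where F': "\<And>n. F' n \<in> fs" "\<And>n. d - 1 / real (Suc n) < e (F' n)" by metis
  define F where "F n = (\<Union>k\<le>n. F' k)" for n
  have Ffs: "F n \<in> fs" for n using F'(1) by (auto simp: F_def fs_def)
  have Fmono: "F n \<subseteq> F m" if "n \<le> m" for n m using that by (force simp: F_def)
  have eF: "d - 1 / real (Suc n) < e (F n)" for n
  proof -
    have "F' n \<subseteq> F n" by (auto simp: F_def)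
    thus ?thesis using F'(2)[of n] e_mono[OF F'(1) Ffs, of n n] by linarith
  qed
  have "\<exists>p. p \<in> D (F n) \<and> (norm p)\<^sup>2 < e (F n) + 1 / real (Suc n)" for n
    using e_approx[OF Ffs, of "1 / real (Suc n)" n] by auto
  then obtain p where p: "\<And>n. p n \<in> D (F n)" "\<And>n. (norm (p n))\<^sup>2 < e (F n) + 1 / real (Suc n)" by metis
  have pc: "(norm (p n - q))\<^sup>2 \<le> 6 / real (Suc n)"
    if "G \<in> fs" "F n \<subseteq> G" "q \<in> D G" "(norm q)\<^sup>2 < e G + 1 / real (Suc n)" for n G q
  proof -
    have "(norm (p n - q))\<^sup>2 \<le> 2 * (norm (p n))\<^sup>2 + 2 * (norm q)\<^sup>2 - 4 * e (F n)"
      using key[OF Ffs that(1,2) p(1) that(3)] .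
    also have "\<dots> \<le> 2 * (e G - e (F n)) + 4 / real (Suc n)" using p(2)[of n] that(4) by simp
    also have "\<dots> \<le> 6 / real (Suc n)" using e_le_d[OF that(1)] eF[of n] by simp
    finally show ?thesis .
  qed
  have pc2: "norm (p n - p m) \<le> sqrt (6 / real (Suc n))" if "n \<le> m" for n m
  proof (rule real_le_rsqrt, rule pc[OF Ffs Fmono[OF that] p(1)])
    have "1 / real (Suc m) \<le> 1 / real (Suc n)" using that by (simp add: frac_le)
    thus "(norm (p m))\<^sup>2 < e (F m) + 1 / real (Suc n)" using p(2)[of m] by simp
  qed
  have "Cauchy p"
  proof (rule CauchyI)
    fix \<epsilon> :: real assume \<epsilon>: "\<epsilon> > 0"
    obtain M where M: "inverse (real (Suc M)) < \<epsilon>\<^sup>2 / 6" using reals_Archimedean[of "\<epsilon>\<^sup>2 / 6"] \<epsilon> by auto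
    have "norm (p m - p n) < \<epsilon>" if "m \<ge> M" "n \<ge> M" for m n
    proof -
      have b: "sqrt (6 / real (Suc k)) < \<epsilon>" if "k \<ge> M" for k
      proof -
        have "6 / real (Suc k) \<le> 6 / real (Suc M)" using that by (simp add: frac_le)
        also have "\<dots> < \<epsilon>\<^sup>2" using M by (simp add: field_simps)
        finally have "sqrt (6 / real (Suc k)) < sqrt (\<epsilon>\<^sup>2)" by (rule real_sqrt_less_mono)
        thus ?thesis using \<epsilon> by simp
      qed
      show ?thesis
      proof (cases "m \<le> n")
        case True thus ?thesis using pc2[OF True] b[OF that(1)] by simp
      next
        case False thus ?thesis using pc2[of n m] b[OF that(2)] by (simp add: norm_minus_commute)
      qed
    qed
    thus "\<exists>M. \<forall>m\<ge>M. \<forall>n\<ge>M. norm (p m - p n) < \<epsilon>" by blast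
  qed
  then obtain l where l: "p \<longlonglongrightarrow> l" using Cauchy_convergent_iff convergent_def by blast
  have sq0: "(\<lambda>n. sqrt (6 / real (Suc n))) \<longlonglongrightarrow> 0"
  proof -
    have "(\<lambda>n. 6 * inverse (real (Suc n))) \<longlonglongrightarrow> 6 * 0"
      by (intro tendsto_mult tendsto_const LIMSEQ_inverse_real_of_nat)
    hence "(\<lambda>n. 6 / real (Suc n)) \<longlonglongrightarrow> 0" by (simp add: divide_inverse)
    from tendsto_real_sqrt[OF this] show ?thesis by simp
  qed
  have "l \<in> S i" if iI: "i \<in> I" for i
  proof -
    have Gfs: "insert i (F n) \<in> fs" for n using Ffs[of n] iI by (auto simp: fs_def)
    have "\<exists>q. q \<in> D (insert i (F n)) \<and> (norm q)\<^sup>2 < e (insert i (F n)) + 1 / real (Suc n)" for n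
      using e_approx[OF Gfs, of "1 / real (Suc n)" n] by auto
    then obtain q where q: "\<And>n. q n \<in> D (insert i (F n))"
      "\<And>n. (norm (q n))\<^sup>2 < e (insert i (F n)) + 1 / real (Suc n)" by metis
    have qd: "norm (p n - q n) \<le> sqrt (6 / real (Suc n))" for n
      by (rule real_le_rsqrt, rule pc[OF Gfs _ q(1) q(2)]) auto
    have "(\<lambda>n. p n - q n) \<longlonglongrightarrow> 0"
      by (rule tendsto_norm_zero_cancel, rule tendsto_sandwich[OF _ _ tendsto_const sq0])
        (use qd in \<open>auto simp del: of_nat_Suc\<close>)
    hence "(\<lambda>n. p n - (p n - q n)) \<longlonglongrightarrow> l - 0" by (intro tendsto_diff l)
    hence ql: "q \<longlonglongrightarrow> l" by simp
    show ?thesis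
    proof (rule closed_sequentially[OF _ _ ql])
      show "closed (S i)" using cc iI by auto
      show "q n \<in> S i" for n using q(1)[of n] by (auto simp: D_def)
    qed
  qed
  thus ?thesis by blast
qed

lemma ball_identity:
  fixes p y w :: "'a::real_inner"
  shows "inner (p - y) (p + w) = (norm (p - (y - w) /\<^sub>R 2))\<^sup>2 - (norm (y + w) / 2)\<^sup>2"
  unfolding power_divide power2_norm_eq_inner
  by (simp add: inner_add_left inner_add_right inner_diff_left inner_diff_right inner_commute algebra_simps)

lemma ball_set:
  fixes y w :: "'a::real_inner"
  shows "{p. inner (p - y) (p + w) \<le> 0} = cball ((y - w) /\<^sub>R 2) (norm (y + w) / 2)"
proof -
  have "inner (p - y) (p + w) \<le> 0 \<longleftrightarrow> dist ((y - w) /\<^sub>R 2) p \<le> norm (y + w) / 2" for p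
    unfolding ball_identity dist_norm norm_minus_commute[of "(y - w) /\<^sub>R 2"]
    by (simp add: power_mono_iff del: power_divide)
  thus ?thesis by (auto simp: cball_def)
qed

lemma minty_point:
  fixes B :: "'a::{real_inner,complete_space} \<Rightarrow> 'a set"
  assumes mm: "maximal_monotone B" and \<alpha>: "\<alpha> > 0"
  shows "\<exists>p. \<exists>u\<in>B p. z = p + \<alpha> *\<^sub>R u"
proof -
  have mono: "inner (x - y) (u - v) \<ge> 0" if "u \<in> B x" "v \<in> B y" for x y u v
    using mm that unfolding maximal_monotone_def monotone_op_def by blast
  define I where "I = {(y, \<alpha> *\<^sub>R v) | y v. v \<in> B y}"
  define S where "S i = {p. inner (p - fst i) (p + (snd i - z)) \<le> 0}" for i :: "'a \<times> 'a"
  have "\<exists>p. \<forall>i\<in>I. p \<in> S i"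
  proof (cases "I = {}")
    case True thus ?thesis by auto
  next
    case False
    then obtain i0 where i0: "i0 \<in> I" by auto
    show ?thesis
    proof (rule hilbert_fip[OF _ i0])
      show "closed (S i) \<and> convex (S i)" for i unfolding S_def ball_set by simp
      show "bounded (S i0)" unfolding S_def ball_set by simp
      show "\<exists>p. \<forall>i\<in>F. p \<in> S i" if finF: "finite F" and FI: "F \<subseteq> I" for F
      proof -
        define P where "P = (\<lambda>i. (fst i, snd i - z)) ` F"
        have "\<exists>p. \<forall>q\<in>P. inner (p - fst q) (p + snd q) \<le> 0"
        proof (rule fin_monotone)
          show "finite P" using finF by (simp add: P_def)
          show "\<forall>q\<in>P. \<forall>q'\<in>P. inner (fst q - fst q') (snd q - snd q') \<ge> 0"
          proof (intro ballI)
            fix q q' assume "q \<in> P" "q' \<in> P"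
            have ex: "\<exists>y v. v \<in> B y \<and> r = (y, \<alpha> *\<^sub>R v - z)" if "r \<in> P" for r
            proof -
              obtain i where "i \<in> F" "r = (fst i, snd i - z)" using \<open>r \<in> P\<close> by (auto simp: P_def)
              moreover then obtain y v where "v \<in> B y" "i = (y, \<alpha> *\<^sub>R v)" using FI by (auto simp: I_def)
              ultimately show ?thesis by auto
            qed
            obtain y v where "v \<in> B y" "q = (y, \<alpha> *\<^sub>R v - z)" using ex[OF \<open>q \<in> P\<close>] by blast
            moreover obtain y' v' where "v' \<in> B y'" "q' = (y', \<alpha> *\<^sub>R v' - z)" using ex[OF \<open>q' \<in> P\<close>] by blast
            moreover have "inner (y - y') (\<alpha> *\<^sub>R v - \<alpha> *\<^sub>R v') = \<alpha> * inner (y - y') (v - v')"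
              by (simp add: inner_diff_right algebra_simps)
            ultimately show "inner (fst q - fst q') (snd q - snd q') \<ge> 0"
              using mono[of v y v' y'] \<alpha> by simp
          qed
        qed
        thus ?thesis by (auto simp: P_def S_def)
      qed
    qed
  qed
  then obtain p where p: "\<forall>i\<in>I. p \<in> S i" by blast
  define u where "u = (1 / \<alpha>) *\<^sub>R (z - p)"
  have maxB: "\<forall>x u. (\<forall>y v. v \<in> B y \<longrightarrow> inner (x - y) (u - v) \<ge> 0) \<longrightarrow> u \<in> B x"
    using mm unfolding maximal_monotone_def by blast
  have "\<forall>y v. v \<in> B y \<longrightarrow> inner (p - y) (u - v) \<ge> 0"
  proof (intro allI impI)
    fix y v assume v: "v \<in> B y"
    hence "(y, \<alpha> *\<^sub>R v) \<in> I" by (auto simp: I_def)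
    hence le: "inner (p - y) (p + (\<alpha> *\<^sub>R v - z)) \<le> 0" using p by (auto simp: S_def)
    have "inner (p - y) (u - v) = - (1 / \<alpha>) * inner (p - y) (p + (\<alpha> *\<^sub>R v - z))"
      using \<alpha> by (simp add: u_def inner_diff_right inner_add_right algebra_simps)
    thus "inner (p - y) (u - v) \<ge> 0" using le \<alpha> by (simp add: divide_nonpos_pos)
  qed
  hence "u \<in> B p" using maxB by blast
  moreover have "z = p + \<alpha> *\<^sub>R u" using \<alpha> by (simp add: u_def)
  ultimately show ?thesis by blast
qed

lemma resolvent_prop:
  fixes B :: "'a::{real_inner,complete_space} \<Rightarrow> 'a set"
  assumes mm: "maximal_monotone B" and \<alpha>: "\<alpha> > 0"
  shows "\<exists>u\<in>B (resolvent \<alpha> B z). z = resolvent \<alpha> B z + \<alpha> *\<^sub>R u"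
proof -
  have mono: "inner (x - y) (u - v) \<ge> 0" if "u \<in> B x" "v \<in> B y" for x y u v
    using mm that unfolding maximal_monotone_def monotone_op_def by blast
  obtain p where p: "\<exists>u\<in>B p. z = p + \<alpha> *\<^sub>R u" using minty_point[OF mm \<alpha>] by blast
  have uniq: "q = p" if qq: "\<exists>u\<in>B q. z = q + \<alpha> *\<^sub>R u" for q
  proof -
    obtain u where u: "u \<in> B p" "z = p + \<alpha> *\<^sub>R u" using p by blast
    obtain w where w: "w \<in> B q" "z = q + \<alpha> *\<^sub>R w" using qq by blast
    have "\<alpha> *\<^sub>R (w - u) = p - q" using u w by (simp add: algebra_simps)
    moreover have "w - u = (1/\<alpha>) *\<^sub>R (\<alpha> *\<^sub>R (w - u))" using \<alpha> by simp
    ultimately have "w - u = (1/\<alpha>) *\<^sub>R (p - q)" by simp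
    moreover have "inner (q - p) (w - u) \<ge> 0" using mono[OF w(1) u(1)] .
    moreover have "p - q = - (q - p)" by simp
    ultimately have "- (1/\<alpha>) * inner (q - p) (q - p) \<ge> 0"
      by (metis inner_minus_right inner_scaleR_right mult_minus_left mult_minus_right)
    hence "inner (q - p) (q - p) \<le> 0" using \<alpha> by (simp add: divide_le_0_iff)
    hence "inner (q - p) (q - p) = 0" using inner_ge_zero[of "q - p"] by linarith
    thus ?thesis by simp
  qed
  have "resolvent \<alpha> B z = p" unfolding resolvent_def
    by (rule the_equality[where P="\<lambda>p. \<exists>u\<in>B p. z = p + \<alpha> *\<^sub>R u", OF p uniq])
  thus ?thesis using p by simp
qed

lemma proj_halfspace:
  fixes w x y0 :: "'a::real_inner"
  assumes ne: "inner w y0 \<le> b"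
  shows "proj {z. inner w z \<le> b} x \<in> {z. inner w z \<le> b}
    \<and> (\<forall>y\<in>{z. inner w z \<le> b}. (norm (proj {z. inner w z \<le> b} x - y))\<^sup>2 + (norm (proj {z. inner w z \<le> b} x - x))\<^sup>2 \<le> (norm (x - y))\<^sup>2)
    \<and> (x \<notin> {z. inner w z \<le> b} \<longrightarrow> norm (proj {z. inner w z \<le> b} x - x) * norm w = inner w x - b)"
proof -
  define T where "T = {z. inner w z \<le> b}"
  define p where "p = (if x \<in> T then x else x - ((inner w x - b) / (norm w)\<^sup>2) *\<^sub>R w)"
  have pT: "p \<in> T" and pyth: "\<forall>y\<in>T. (norm (p - y))\<^sup>2 + (norm (p - x))\<^sup>2 \<le> (norm (x - y))\<^sup>2"
    and pd: "x \<notin> T \<longrightarrow> norm (p - x) * norm w = inner w x - b"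
  proof -
    have "p \<in> T \<and> (\<forall>y\<in>T. (norm (p - y))\<^sup>2 + (norm (p - x))\<^sup>2 \<le> (norm (x - y))\<^sup>2)
       \<and> (x \<notin> T \<longrightarrow> norm (p - x) * norm w = inner w x - b)"
    proof (cases "x \<in> T")
      case True thus ?thesis by (simp add: p_def norm_minus_commute)
    next
      case False
      hence gt: "inner w x > b" by (simp add: T_def)
      have w0: "w \<noteq> 0" using gt ne by auto
      hence nw: "(norm w)\<^sup>2 > 0" by simp
      define l where "l = (inner w x - b) / (norm w)\<^sup>2"
      have l0: "l > 0" using gt nw by (simp add: l_def)
      have pdef: "p = x - l *\<^sub>R w" using False by (simp add: p_def l_def)
      have wp: "inner w p = b" using nw
        by (simp add: pdef l_def inner_diff_right power2_norm_eq_inner[symmetric])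
      have "\<forall>y\<in>T. (norm (p - y))\<^sup>2 + (norm (p - x))\<^sup>2 \<le> (norm (x - y))\<^sup>2"
      proof
        fix y assume "y \<in> T"
        hence wy: "inner w y \<le> b" by (simp add: T_def)
        have "(norm (x - y))\<^sup>2 = (norm (x - p))\<^sup>2 + (norm (p - y))\<^sup>2 + 2 * inner (x - p) (p - y)"
          unfolding power2_norm_eq_inner by (simp add: inner_diff_left inner_diff_right inner_commute algebra_simps)
        also have "inner (x - p) (p - y) = l * (b - inner w y)"
        proof -
          have xp: "x - p = l *\<^sub>R w" by (simp add: pdef)
          show ?thesis unfolding xp using wp by (simp add: inner_diff_right right_diff_distrib)
        qed
        finally show "(norm (p - y))\<^sup>2 + (norm (p - x))\<^sup>2 \<le> (norm (x - y))\<^sup>2"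
          using l0 wy by (simp add: norm_minus_commute)
      qed
      moreover have "norm (p - x) * norm w = inner w x - b"
        using gt w0 by (simp add: pdef l_def power2_eq_square)
      ultimately show ?thesis using wp by (simp add: T_def)
    qed
    thus "p \<in> T" "\<forall>y\<in>T. (norm (p - y))\<^sup>2 + (norm (p - x))\<^sup>2 \<le> (norm (x - y))\<^sup>2"
      "x \<notin> T \<longrightarrow> norm (p - x) * norm w = inner w x - b" by auto
  qed
  have "proj T x = p" unfolding proj_def
  proof (rule the_equality)
    show "p \<in> T \<and> (\<forall>y\<in>T. norm (x - p) \<le> norm (x - y))"
    proof (intro conjI ballI pT)
      fix y assume "y \<in> T"
      hence "(norm (p - x))\<^sup>2 \<le> (norm (x - y))\<^sup>2" using pyth by (smt (verit) zero_le_power2)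
      thus "norm (x - p) \<le> norm (x - y)" by (simp add: norm_minus_commute power_mono_iff)
    qed
    fix q assume q: "q \<in> T \<and> (\<forall>y\<in>T. norm (x - q) \<le> norm (x - y))"
    hence "norm (x - q) \<le> norm (x - p)" using pT by blast
    hence a: "(norm (x - q))\<^sup>2 \<le> (norm (x - p))\<^sup>2" by (simp add: power_mono)
    have b: "(norm (p - q))\<^sup>2 + (norm (p - x))\<^sup>2 \<le> (norm (x - q))\<^sup>2" using pyth q by blast
    have c: "(norm (p - x))\<^sup>2 = (norm (x - p))\<^sup>2" by (simp add: norm_minus_commute)
    have "(norm (p - q))\<^sup>2 \<le> 0" using a b c by linarith
    thus "q = p" by simp
  qed
  thus ?thesis using pT pyth pd unfolding T_def by simp
qed

lemma uc_growth:
  fixes f :: "'a::real_normed_vector \<Rightarrow> 'b::real_normed_vector"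
  assumes uc: "uniformly_continuous_on UNIV f"
  shows "\<exists>C. \<forall>a b. norm (f a - f b) \<le> C * (norm (a - b) + 1)"
proof -
  obtain \<eta> where \<eta>: "\<eta> > 0" and h: "\<And>x x'. dist x' x < \<eta> \<Longrightarrow> dist (f x') (f x) < 1"
    using uc unfolding uniformly_continuous_on_def by (metis UNIV_I zero_less_one)
  have "norm (f b - f a) \<le> (1 / \<eta> + 2) * (norm (b - a) + 1)" for a b
  proof -
    define N where "N = nat (ceiling (norm (b - a) / \<eta>)) + 1"
    have N1: "real N \<ge> 1" by (simp add: N_def)
    have "0 \<le> norm (b - a) / \<eta>" using \<eta> by simp
    hence cnn: "0 \<le> ceiling (norm (b - a) / \<eta>)" by simp
    have rN: "real N = of_int (ceiling (norm (b - a) / \<eta>)) + 1"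
      using cnn by (simp add: N_def)
    have NN: "real N > norm (b - a) / \<eta>"
      unfolding rN using le_of_int_ceiling[of "norm (b - a) / \<eta>"] by linarith
    have Nle: "real N \<le> norm (b - a) / \<eta> + 2"
      unfolding rN using of_int_ceiling_le_add_one[of "norm (b - a) / \<eta>"] by linarith
    define pt where "pt i = a + (real i / real N) *\<^sub>R (b - a)" for i
    have stepd: "norm (pt (Suc i) - pt i) < \<eta>" for i
    proof -
      have "pt (Suc i) - pt i = (real (Suc i) / real N - real i / real N) *\<^sub>R (b - a)"
        unfolding pt_def scaleR_diff_left by simp
      also have "real (Suc i) / real N - real i / real N = 1 / real N"
        by (simp add: diff_divide_distrib[symmetric])
      finally have "pt (Suc i) - pt i = (1 / real N) *\<^sub>R (b - a)" .
      hence "norm (pt (Suc i) - pt i) = norm (b - a) / real N" using N1 by simp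
      also have "\<dots> < \<eta>" using NN \<eta> N1 by (simp add: field_simps)
      finally show ?thesis .
    qed
    have ind: "norm (f (pt i) - f a) \<le> real i" for i
    proof (induction i)
      case 0 thus ?case by (simp add: pt_def)
    next
      case (Suc i)
      have "dist (f (pt (Suc i))) (f (pt i)) < 1" using h stepd[of i] by (simp add: dist_norm)
      hence "norm (f (pt (Suc i)) - f (pt i)) < 1" by (simp add: dist_norm)
      moreover have "norm (f (pt (Suc i)) - f a) \<le> norm (f (pt (Suc i)) - f (pt i)) + norm (f (pt i) - f a)"
        using norm_triangle_ineq[of "f (pt (Suc i)) - f (pt i)" "f (pt i) - f a"] by simp
      ultimately show ?case using Suc.IH by simp
    qed
    have "pt N = b" using N1 by (simp add: pt_def)
    hence "norm (f b - f a) \<le> real N" using ind[of N] by simp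
    also have "\<dots> \<le> norm (b - a) / \<eta> + 2" by (rule Nle)
    also have "\<dots> \<le> (1 / \<eta> + 2) * (norm (b - a) + 1)"
      using \<eta> by (simp add: field_simps)
    finally show ?thesis .
  qed
  thus ?thesis by blast
qed



theorem proposition4p7:
  fixes A1 A2 :: "'a::{real_inner, complete_space} \<Rightarrow> 'a"
    and B :: "'a \<Rightarrow> 'a set"
    and \<beta> \<theta> \<delta> \<delta>bar \<alpha>m1 :: real
    and x xbar :: "nat \<Rightarrow> 'a"
    and \<alpha> :: "nat \<Rightarrow> real"
    and j :: "nat \<Rightarrow> nat"
  assumes \<beta>: "\<beta> > 0" and coco: "cocoercive \<beta> A1"
    and A2_mm: "maximal_monotone (\<lambda>x. {A2 x})"
    and A2_uc: "uniformly_continuous_on UNIV A2"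
    and B_mm: "maximal_monotone B"
    and zer_ne: "zer_sum (\<lambda>x. A1 x + A2 x) B \<noteq> {}"
    and \<theta>: "0 < \<theta>" "\<theta> < 1"
    and \<delta>: "0 < \<delta>" "\<delta> < 1"
    and \<delta>bar: "\<delta>bar > 0" "1 - \<delta> - \<delta>bar > 0"
    and \<alpha>m1: "\<alpha>m1 > 0" "\<alpha>m1 \<le> 4 * \<beta> * \<delta>bar"
    and j_ok: "\<And>k. (let ap = (if k = 0 then \<alpha>m1 else \<alpha> (k - 1));
                        xj = resolvent (ap * \<theta> ^ j k) B
                               (x k - (ap * \<theta> ^ j k) *\<^sub>R (A1 (x k) + A2 (x k)))
                    in ap * \<theta> ^ j k * inner (A2 (x k) - A2 xj) (x k - xj)
                         \<le> \<delta> * (norm (x k - xj))\<^sup>2)"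
    and j_least: "\<And>k i. i < j k \<Longrightarrow>
                   (let ap = (if k = 0 then \<alpha>m1 else \<alpha> (k - 1));
                        xj = resolvent (ap * \<theta> ^ i) B
                               (x k - (ap * \<theta> ^ i) *\<^sub>R (A1 (x k) + A2 (x k)))
                    in \<not> (ap * \<theta> ^ i * inner (A2 (x k) - A2 xj) (x k - xj)
                         \<le> \<delta> * (norm (x k - xj))\<^sup>2))"
    and \<alpha>_def: "\<And>k. \<alpha> k = (if k = 0 then \<alpha>m1 else \<alpha> (k - 1)) * \<theta> ^ j k"
    and xbar_def: "\<And>k. xbar k = resolvent (\<alpha> k) B (x k - \<alpha> k *\<^sub>R (A1 (x k) + A2 (x k)))"
    and x_next: "\<And>k. x (Suc k) = proj
        {z. inner ((1 / \<alpha> k) *\<^sub>R (x k - xbar k) - (A2 (x k) - A2 (xbar k))) (z - xbar k)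
              \<le> \<delta>bar / \<alpha> k * (norm (x k - xbar k))\<^sup>2} (x k)"
    and no_stop: "\<And>k. x (Suc k) \<noteq> x k"
  shows "(\<forall>z \<in> zer_sum (\<lambda>x. A1 x + A2 x) B. \<exists>K. \<forall>k \<ge> K. norm (x (Suc k) - z) \<le> norm (x k - z))
       \<and> bounded (range x)
       \<and> (\<lambda>k. inner (x k - xbar k - \<alpha> k *\<^sub>R (A2 (x k) - A2 (xbar k))) (x k - xbar k)
                - \<delta>bar * (norm (x k - xbar k))\<^sup>2) \<longlonglongrightarrow> 0"
proof -
  define A where "A z = A1 z + A2 z" for z
  have mB: "inner (p - q) (u - v) \<ge> 0" if "u \<in> B p" "v \<in> B q" for p q u v
    using B_mm that unfolding maximal_monotone_def monotone_op_def by blast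
  have mA2: "inner (p - q) (A2 p - A2 q) \<ge> 0" for p q
    using A2_mm unfolding maximal_monotone_def monotone_op_def by blast
  have cA1: "inner (A1 p - A1 q) (p - q) \<ge> \<beta> * (norm (A1 p - A1 q))\<^sup>2" for p q
    using coco unfolding cocoercive_def by blast
  have \<theta>pow: "0 < \<theta> ^ n \<and> \<theta> ^ n \<le> 1" for n using \<theta> by (simp add: power_le_one)
  have \<alpha>pos: "0 < \<alpha> k \<and> \<alpha> k \<le> \<alpha>m1" for k
  proof (induction k)
    case 0
    have "\<alpha> 0 = \<alpha>m1 * \<theta> ^ j 0" using \<alpha>_def[of 0] by simp
    thus ?case using \<theta>pow[of "j 0"] \<alpha>m1 by (simp add: mult_le_cancel_left1)
  next
    case (Suc k)
    have e: "\<alpha> (Suc k) = \<alpha> k * \<theta> ^ j (Suc k)" using \<alpha>_def[of "Suc k"] by simp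
    have "\<alpha> (Suc k) \<le> \<alpha> k" unfolding e using \<theta>pow[of "j (Suc k)"] Suc.IH
      by (simp add: mult_le_cancel_left1)
    moreover have "\<alpha> (Suc k) > 0" unfolding e using \<theta>pow[of "j (Suc k)"] Suc.IH by simp
    ultimately show ?case using Suc.IH by linarith
  qed
  have res: "\<exists>u\<in>B (xbar k). x k - \<alpha> k *\<^sub>R A (x k) = xbar k + \<alpha> k *\<^sub>R u" for k
    unfolding xbar_def A_def using resolvent_prop[OF B_mm, of "\<alpha> k"] \<alpha>pos[of k] by blast
  define w where "w k = (1 / \<alpha> k) *\<^sub>R (x k - xbar k) - (A2 (x k) - A2 (xbar k))" for k
  define r where "r k = \<delta>bar / \<alpha> k * (norm (x k - xbar k))\<^sup>2" for k
  define b where "b k = r k + inner (w k) (xbar k)" for k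
  have r0: "r k \<ge> 0" for k using \<alpha>pos[of k] \<delta>bar by (simp add: r_def)
  have xn: "x (Suc k) = proj {z. inner (w k) z \<le> b k} (x k)" for k
  proof -
    have "{z. inner (w k) (z - xbar k) \<le> r k} = {z. inner (w k) z \<le> b k}"
      by (auto simp: b_def inner_diff_right)
    moreover have "x (Suc k) = proj {z. inner (w k) (z - xbar k) \<le> r k} (x k)"
      unfolding w_def r_def by (rule x_next)
    ultimately show ?thesis by simp
  qed
  have PH: "(\<forall>y. inner (w k) y \<le> b k \<longrightarrow> (norm (x (Suc k) - y))\<^sup>2 + (norm (x (Suc k) - x k))\<^sup>2 \<le> (norm (x k - y))\<^sup>2)
     \<and> (inner (w k) (x k) > b k \<longrightarrow> norm (x (Suc k) - x k) * norm (w k) = inner (w k) (x k) - b k)" for k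
  proof -
    have "inner (w k) (xbar k) \<le> b k" using r0[of k] by (simp add: b_def)
    from proj_halfspace[OF this, of "x k"] show ?thesis unfolding xn[symmetric] by auto
  qed
  have notT: "inner (w k) (x k) > b k" for k
  proof (rule ccontr)
    assume "\<not> inner (w k) (x k) > b k"
    hence "inner (w k) (x k) \<le> b k" by simp
    hence "(norm (x (Suc k) - x k))\<^sup>2 + (norm (x (Suc k) - x k))\<^sup>2 \<le> (norm (x k - x k))\<^sup>2"
      using PH[of k] by blast
    hence "x (Suc k) = x k" by simp
    thus False using no_stop by blast
  qed
  have dist_eq: "norm (x (Suc k) - x k) * norm (w k) = inner (w k) (x k) - b k" for k
    using PH[of k] notT[of k] by blast
  have inT: "inner (w k) z \<le> b k" if zz: "z \<in> zer_sum (\<lambda>x. A1 x + A2 x) B" for z k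
  proof -
    obtain u' where u': "u' \<in> B z" "A1 z + A2 z + u' = 0" using zz by (auto simp: zer_sum_def)
    obtain u where u: "u \<in> B (xbar k)" "x k - \<alpha> k *\<^sub>R A (x k) = xbar k + \<alpha> k *\<^sub>R u" using res by blast
    have ak: "\<alpha> k > 0" "\<alpha> k \<le> \<alpha>m1" using \<alpha>pos by auto
    have uk: "\<alpha> k *\<^sub>R u = x k - xbar k - \<alpha> k *\<^sub>R A (x k)" using u(2) by (simp add: algebra_simps)
    have "u = (1 / \<alpha> k) *\<^sub>R (\<alpha> k *\<^sub>R u)" using ak by simp
    also have "\<dots> = (1 / \<alpha> k) *\<^sub>R (x k - xbar k) - A (x k)"
      unfolding uk using ak by (simp add: scaleR_diff_right)
    finally have ueq: "u = (1 / \<alpha> k) *\<^sub>R (x k - xbar k) - (A1 (x k) + A2 (x k))" by (simp add: A_def)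
    have u'eq: "u' = - (A1 z + A2 z)" using u'(2) by (metis add.commute add_eq_0_iff)
    have wdec: "w k = (u - u') + (A1 (x k) - A1 z) + (A2 (xbar k) - A2 z)"
      unfolding w_def ueq u'eq by (simp add: algebra_simps)
    define d where "d = norm (x k - xbar k)"
    define a where "a = A1 (x k) - A1 z"
    have T1: "inner (u - u') (z - xbar k) \<le> 0"
      using mB[OF u(1) u'(1)] by (simp add: inner_commute inner_diff_left inner_diff_right)
    have T3: "inner (A2 (xbar k) - A2 z) (z - xbar k) \<le> 0"
      using mA2[of "xbar k" z] by (simp add: inner_commute inner_diff_left inner_diff_right)
    have T2a: "inner a (z - x k) \<le> - \<beta> * (norm a)\<^sup>2"
      using cA1[of "x k" z] by (simp add: a_def inner_diff_right)
    have T2b: "inner a (x k - xbar k) \<le> norm a * d"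
      using Cauchy_Schwarz_ineq2[of a "x k - xbar k"] by (simp add: d_def)
    have amgm: "norm a * d - \<beta> * (norm a)\<^sup>2 \<le> d\<^sup>2 / (4 * \<beta>)"
    proof -
      have "0 \<le> (d - 2 * \<beta> * norm a)\<^sup>2" by simp
      hence "4 * \<beta> * (norm a * d - \<beta> * (norm a)\<^sup>2) \<le> d\<^sup>2"
        by (simp add: power2_eq_square algebra_simps)
      thus ?thesis using \<beta> by (simp add: field_simps)
    qed
    have "d\<^sup>2 / (4 * \<beta>) \<le> \<delta>bar / \<alpha> k * d\<^sup>2"
    proof -
      have "\<alpha> k \<le> 4 * \<beta> * \<delta>bar" using ak \<alpha>m1 by linarith
      hence "1 / (4 * \<beta>) \<le> \<delta>bar / \<alpha> k" using ak \<beta> \<delta>bar by (simp add: field_simps)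
      hence "1 / (4 * \<beta>) * d\<^sup>2 \<le> \<delta>bar / \<alpha> k * d\<^sup>2" by (rule mult_right_mono) simp
      thus ?thesis by simp
    qed
    have "inner (w k) (z - xbar k) = inner (u - u') (z - xbar k) + (inner a (z - x k) + inner a (x k - xbar k))
          + inner (A2 (xbar k) - A2 z) (z - xbar k)"
      unfolding wdec a_def by (simp add: inner_add_left inner_diff_right algebra_simps)
    also have "\<dots> \<le> r k"
      using T1 T2a T2b T3 amgm \<open>d\<^sup>2 / (4 * \<beta>) \<le> \<delta>bar / \<alpha> k * d\<^sup>2\<close> by (simp add: r_def d_def)
    finally show ?thesis by (simp add: b_def inner_diff_right)
  qed
  have fej: "(norm (x (Suc k) - z))\<^sup>2 + (norm (x (Suc k) - x k))\<^sup>2 \<le> (norm (x k - z))\<^sup>2"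
    if "z \<in> zer_sum (\<lambda>x. A1 x + A2 x) B" for z k
    using PH[of k] inT[OF that, of k] by blast
  have fej2: "norm (x (Suc k) - z) \<le> norm (x k - z)" if "z \<in> zer_sum (\<lambda>x. A1 x + A2 x) B" for z k
  proof -
    have "(norm (x (Suc k) - z))\<^sup>2 \<le> (norm (x k - z))\<^sup>2"
      using fej[OF that, of k] zero_le_power2[of "norm (x (Suc k) - x k)"] by linarith
    thus ?thesis by (rule power2_le_imp_le) simp
  qed
  have part1: "\<forall>z \<in> zer_sum (\<lambda>x. A1 x + A2 x) B. \<exists>K. \<forall>k \<ge> K. norm (x (Suc k) - z) \<le> norm (x k - z)"
    using fej2 by blast
  obtain z0 where z0: "z0 \<in> zer_sum (\<lambda>x. A1 x + A2 x) B" using zer_ne by blast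
  define R0 where "R0 = norm (x 0 - z0)"
  have xb: "norm (x k - z0) \<le> R0" for k
  proof (induction k)
    case 0 thus ?case by (simp add: R0_def)
  next
    case (Suc k) thus ?case using fej2[OF z0, of k] by simp
  qed
  have part2: "bounded (range x)"
    unfolding bounded_iff
  proof (intro exI ballI)
    fix y assume "y \<in> range x"
    then obtain k where "y = x k" by auto
    have "norm (x k) \<le> norm (x k - z0) + norm z0" using norm_triangle_ineq[of "x k - z0" z0] by simp
    thus "norm y \<le> R0 + norm z0" using xb[of k] \<open>y = x k\<close> by simp
  qed
  define dd where "dd k = norm (x (Suc k) - x k)" for k
  define s where "s k = (norm (x k - z0))\<^sup>2" for k
  have sdec: "decseq s" unfolding s_def
    by (rule decseq_SucI) (use fej[OF z0] zero_le_power2 in \<open>smt (verit)\<close>)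
  obtain L where sL: "s \<longlonglongrightarrow> L" using decseq_convergent[OF sdec, of 0] by (auto simp: s_def)
  have "(\<lambda>k. s k - s (Suc k)) \<longlonglongrightarrow> L - L" by (intro tendsto_diff sL LIMSEQ_Suc[OF sL])
  hence "(\<lambda>k. sqrt (s k - s (Suc k))) \<longlonglongrightarrow> sqrt 0" by (intro tendsto_real_sqrt) simp
  hence sq0: "(\<lambda>k. sqrt (s k - s (Suc k))) \<longlonglongrightarrow> 0" by simp
  have ddle: "dd k \<le> sqrt (s k - s (Suc k))" for k
    unfolding dd_def s_def by (rule real_le_rsqrt) (use fej[OF z0, of k] in linarith)
  have dd0: "dd \<longlonglongrightarrow> 0"
    by (rule tendsto_sandwich[OF _ _ tendsto_const sq0]) (use ddle in \<open>auto simp: dd_def\<close>)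
  have ddb: "dd k \<le> 2 * R0" for k
  proof -
    have "dd k \<le> norm (x (Suc k) - z0) + norm (x k - z0)"
      unfolding dd_def using norm_triangle_ineq4[of "x (Suc k) - z0" "x k - z0"] by simp
    thus ?thesis using xb[of k] xb[of "Suc k"] by simp
  qed
  obtain C where C: "\<And>a b. norm (A2 a - A2 b) \<le> C * (norm (a - b) + 1)"
    using uc_growth[OF A2_uc] by blast
  have C0: "C \<ge> 0" using C[of 0 0] by simp
  define \<rho> where "\<rho> k = norm (x k - xbar k)" for k
  define Q where "Q k = inner (x k - xbar k - \<alpha> k *\<^sub>R (A2 (x k) - A2 (xbar k))) (x k - xbar k)
                - \<delta>bar * (norm (x k - xbar k))\<^sup>2" for k
  define cc where "cc = 1 - \<delta> - \<delta>bar"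
  have cc0: "cc > 0" using \<delta>bar by (simp add: cc_def)
  have aw: "\<alpha> k *\<^sub>R w k = x k - xbar k - \<alpha> k *\<^sub>R (A2 (x k) - A2 (xbar k))" for k
    using \<alpha>pos[of k] by (simp add: w_def scaleR_diff_right)
  have Qeq: "Q k = norm (x k - xbar k - \<alpha> k *\<^sub>R (A2 (x k) - A2 (xbar k))) * dd k" for k
  proof -
    have ak: "\<alpha> k > 0" using \<alpha>pos by auto
    have "Q k = inner (\<alpha> k *\<^sub>R w k) (x k - xbar k) - \<alpha> k * r k"
      unfolding Q_def aw r_def using ak by simp
    also have "\<dots> = \<alpha> k * (inner (w k) (x k) - b k)"
      by (simp add: b_def inner_diff_right algebra_simps)
    also have "\<dots> = \<alpha> k * (dd k * norm (w k))" unfolding dist_eq[symmetric] dd_def ..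
    also have "\<dots> = norm (\<alpha> k *\<^sub>R w k) * dd k" using ak by simp
    finally show ?thesis unfolding aw .
  qed
  have Qlow: "Q k \<ge> cc * (\<rho> k)\<^sup>2" for k
  proof -
    have jk: "\<alpha> k * inner (A2 (x k) - A2 (xbar k)) (x k - xbar k) \<le> \<delta> * (\<rho> k)\<^sup>2"
      using j_ok[of k] unfolding Let_def \<alpha>_def[of k, symmetric] xbar_def[of k, symmetric] \<rho>_def .
    have "Q k = (\<rho> k)\<^sup>2 - \<alpha> k * inner (A2 (x k) - A2 (xbar k)) (x k - xbar k) - \<delta>bar * (\<rho> k)\<^sup>2"
      unfolding Q_def \<rho>_def by (simp add: inner_diff_left power2_norm_eq_inner)
    thus ?thesis using jk by (simp add: cc_def algebra_simps)
  qed
  define a1 where "a1 = 1 + \<alpha>m1 * C"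
  define a0 where "a0 = \<alpha>m1 * C"
  have a0p: "a0 \<ge> 0" using C0 \<alpha>m1 by (simp add: a0_def)
  have a1p: "a1 \<ge> 1" using C0 \<alpha>m1 by (simp add: a1_def)
  have Qup: "Q k \<le> (a1 * \<rho> k + a0) * dd k" for k
  proof -
    have ak: "\<alpha> k > 0" "\<alpha> k \<le> \<alpha>m1" using \<alpha>pos by auto
    have "norm (\<alpha> k *\<^sub>R (A2 (x k) - A2 (xbar k))) = \<alpha> k * norm (A2 (x k) - A2 (xbar k))"
      using ak by simp
    also have "\<dots> \<le> \<alpha>m1 * (C * (\<rho> k + 1))"
      using ak C[of "x k" "xbar k"] by (intro mult_mono) (auto simp: \<rho>_def)
    finally have h: "norm (\<alpha> k *\<^sub>R (A2 (x k) - A2 (xbar k))) \<le> \<alpha>m1 * (C * (\<rho> k + 1))" .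
    have "norm (x k - xbar k - \<alpha> k *\<^sub>R (A2 (x k) - A2 (xbar k))) \<le> \<rho> k + norm (\<alpha> k *\<^sub>R (A2 (x k) - A2 (xbar k)))"
      unfolding \<rho>_def by (rule norm_triangle_ineq4)
    also have "\<dots> \<le> a1 * \<rho> k + a0" using h by (simp add: a1_def a0_def algebra_simps)
    finally have "norm (x k - xbar k - \<alpha> k *\<^sub>R (A2 (x k) - A2 (xbar k))) \<le> a1 * \<rho> k + a0" .
    thus ?thesis unfolding Qeq by (rule mult_right_mono) (simp add: dd_def)
  qed
  define R\<rho> where "R\<rho> = max 1 ((a1 + a0) * (2 * R0) / cc)"
  have \<rho>b: "\<rho> k \<le> R\<rho>" for k
  proof (cases "\<rho> k \<le> 1")
    case True thus ?thesis by (simp add: R\<rho>_def)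
  next
    case False
    hence r1: "\<rho> k > 1" by simp
    have "cc * (\<rho> k)\<^sup>2 \<le> (a1 * \<rho> k + a0) * dd k" using Qlow[of k] Qup[of k] by linarith
    also have "\<dots> \<le> (a1 * \<rho> k + a0 * \<rho> k) * (2 * R0)"
      using ddb[of k] a0p a1p r1 mult_left_mono[of 1 "\<rho> k" a0] by (intro mult_mono) (auto simp: dd_def)
    finally have "cc * \<rho> k * \<rho> k \<le> ((a1 + a0) * (2 * R0)) * \<rho> k"
      by (simp add: power2_eq_square algebra_simps)
    hence "cc * \<rho> k \<le> (a1 + a0) * (2 * R0)" using r1 by simp
    hence "\<rho> k \<le> (a1 + a0) * (2 * R0) / cc" using cc0 by (simp add: field_simps)
    thus ?thesis by (simp add: R\<rho>_def)
  qed
  have Q0: "(\<lambda>k. Q k) \<longlonglongrightarrow> 0"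
  proof (rule tendsto_sandwich[OF _ _ tendsto_const])
    show "\<forall>\<^sub>F k in sequentially. 0 \<le> Q k"
    proof (rule always_eventually, rule allI)
      fix k
      have "0 \<le> cc * (\<rho> k)\<^sup>2" using cc0 by simp
      thus "0 \<le> Q k" using Qlow[of k] by linarith
    qed
    show "\<forall>\<^sub>F k in sequentially. Q k \<le> (a1 * R\<rho> + a0) * dd k"
    proof (rule always_eventually, rule allI)
      fix k
      have "(a1 * \<rho> k + a0) * dd k \<le> (a1 * R\<rho> + a0) * dd k"
        using \<rho>b[of k] a1p by (intro mult_right_mono) (auto simp: dd_def)
      thus "Q k \<le> (a1 * R\<rho> + a0) * dd k" using Qup[of k] by linarith
    qed
    have "(\<lambda>k. (a1 * R\<rho> + a0) * dd k) \<longlonglongrightarrow> (a1 * R\<rho> + a0) * 0" by (intro tendsto_mult tendsto_const dd0)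
    thus "(\<lambda>k. (a1 * R\<rho> + a0) * dd k) \<longlonglongrightarrow> 0" by simp
  qed
  show ?thesis using part1 part2 Q0 unfolding Q_def by blast
qed

end
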